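(* Let $\mathcal{A}$ be a prime Banach algebra with a nonzero idempotent $p$ (i.e. $p^2=p\neq0$) such that $\mathcal{A}p$ is finite dimensional. Then every derivation on $\mathcal{A}$ is continuous.
   Context: A derivation on $\mathcal{A}$ is a linear map $\delta:\mathcal{A}\to\mathcal{A}$ with $\delta(ab)=a\delta(b)+\delta(a)b$ for all $a,b\in\mathcal{A}$; it is not assumed continuous. *)

theory Defs
  imports "HOL-Analysis.Analysis"
begin

definition derivation :: "('a::real_normed_algebra \<Rightarrow> 'a) \<Rightarrow> bool" where
  "derivation \<delta> \<longleftrightarrow> linear \<delta> \<and> (\<forall>a b. \<delta> (a * b) = a * \<delta> b + \<delta> a * b)"

definition prime_algebra :: "'a::real_normed_algebra itself \<Rightarrow> bool" where
  "prime_algebra _ \<longleftrightarrow> (\<forall>a b::'a. (\<forall>x. a * x * b = 0) \<longrightarrow> a = 0 \<or> b = 0)"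

definition fin_dim_subspace :: "'a::real_vector set \<Rightarrow> bool" where
  "fin_dim_subspace S \<longleftrightarrow> (\<exists>B. finite B \<and> span B = S)"

end

theory Submission
  imports Defs
begin

lemma fin_kernel:
  fixes F :: "('a::real_vector \<Rightarrow> real) set"
  assumes "finite F"
  shows "(\<forall>f\<in>F. linear f) \<Longrightarrow> subspace W \<Longrightarrow> (\<forall>w\<in>W. (\<forall>f\<in>F. f w = 0) \<longrightarrow> w = 0)
     \<Longrightarrow> \<exists>T. finite T \<and> W \<subseteq> span T"
  using assms
proof (induction F arbitrary: W rule: finite_induct)
  case empty
  then have "W \<subseteq> span {}" by (auto simp: span_empty)
  then show ?case by blast
next
  case (insert f F)
  have lf: "linear f" using insert.prems by auto
  define W' where "W' = W \<inter> {x. f x = 0}"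
  have sW: "subspace W'"
    unfolding W'_def subspace_def using insert.prems(2) lf
    by (simp add: subspace_0 subspace_add subspace_scale linear_0 linear_add linear_scale)
  moreover have kW: "\<forall>w\<in>W'. (\<forall>g\<in>F. g w = 0) \<longrightarrow> w = 0"
    using insert.prems(3) unfolding W'_def by auto
  have lF: "\<forall>g\<in>F. linear g" using insert.prems(1) by auto
  obtain T where T: "finite T" "W' \<subseteq> span T"
    using insert.IH[OF lF sW kW] by blast
  show ?case
  proof (cases "\<forall>w\<in>W. f w = 0")
    case True
    then have "W \<subseteq> W'" unfolding W'_def by auto
    then show ?thesis using T by blast
  next
    case False
    then obtain w0 where w0: "w0 \<in> W" "f w0 \<noteq> 0" by auto
    have "W \<subseteq> span (insert w0 T)"
    proof
      fix w assume w: "w \<in> W"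
      let ?u = "w - (f w / f w0) *\<^sub>R w0"
      have "?u \<in> W" using w w0 insert.prems(2) by (simp add: subspace_diff subspace_scale)
      moreover have "f ?u = 0" using w0 lf by (simp add: linear_diff linear_scale)
      ultimately have "?u \<in> span T" using T W'_def by auto
      then have "?u \<in> span (insert w0 T)" by (meson span_mono subset_insertI subsetD)
      moreover have "(f w / f w0) *\<^sub>R w0 \<in> span (insert w0 T)"
        by (simp add: span_base span_scale)
      ultimately have "?u + (f w / f w0) *\<^sub>R w0 \<in> span (insert w0 T)"
        by (rule span_add)
      then show "w \<in> span (insert w0 T)" by simp
    qed
    then show ?thesis using T by blast
  qed
qed

lemma coeff_bound:
  fixes B :: "'a::real_normed_vector set"
  assumes "finite B"
  shows "independent B \<Longrightarrow> \<exists>C\<ge>0. \<forall>c. \<forall>v\<in>B. \<bar>c v\<bar> \<le> C * norm (\<Sum>w\<in>B. c w *\<^sub>R w)"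
  using assms
proof (induction B rule: finite_induct)
  case empty show ?case by auto
next
  case (insert b B)
  have iB: "independent B" and bS: "b \<notin> span B"
    using insert.prems insert.hyps by (auto simp: independent_insert)
  obtain C where C0: "C \<ge> 0" and C: "\<forall>c. \<forall>v\<in>B. \<bar>c v\<bar> \<le> C * norm (\<Sum>w\<in>B. c w *\<^sub>R w)"
    using insert.IH[OF iB] by blast
  have cl: "closed (span B)"
    unfolding closed_sequential_limits
  proof (intro allI impI, elim conjE)
    fix x l assume xs: "\<forall>n. x n \<in> span B" and lim: "x \<longlonglongrightarrow> l"
    have "\<forall>n. \<exists>u. x n = (\<Sum>v\<in>B. u v *\<^sub>R v)"
      using xs span_finite[OF insert.hyps(1)] by blast
    then obtain u where u: "\<And>n. x n = (\<Sum>v\<in>B. u n v *\<^sub>R v)" by metis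
    have cx: "Cauchy x" using lim LIMSEQ_imp_Cauchy by blast
    have cau: "Cauchy (\<lambda>n. u n v)" if v: "v \<in> B" for v
    proof (rule CauchyI)
      fix e::real assume e: "e > 0"
      have "e / (C+1) > 0" using e C0 by simp
      then obtain M where M: "\<forall>m\<ge>M. \<forall>n\<ge>M. norm (x m - x n) < e / (C+1)"
        using cx CauchyD by blast
      show "\<exists>M. \<forall>m\<ge>M. \<forall>n\<ge>M. norm (u m v - u n v) < e"
      proof (intro exI allI impI)
        fix m n assume mn: "m \<ge> M" "n \<ge> M"
        have "x m - x n = (\<Sum>w\<in>B. (u m w - u n w) *\<^sub>R w)"
          by (simp add: u sum_subtractf scaleR_diff_left)
        then have "\<bar>u m v - u n v\<bar> \<le> C * norm (x m - x n)"
          using C[rule_format, of v "\<lambda>w. u m w - u n w"] v by simp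
        also have "\<dots> \<le> C * (e / (C+1))"
          using M mn C0 by (intro mult_left_mono) (auto simp: less_imp_le)
        also have "\<dots> < e" using C0 e by (simp add: field_simps)
        finally show "norm (u m v - u n v) < e" by simp
      qed
    qed
    have "\<forall>v\<in>B. \<exists>l. (\<lambda>n. u n v) \<longlonglongrightarrow> l"
      using cau by (simp add: Cauchy_convergent_iff convergent_def)
    then obtain d where d0: "\<forall>v\<in>B. (\<lambda>n. u n v) \<longlonglongrightarrow> d v"
      by (rule bchoice[elim_format]) blast
    have d: "\<And>v. v\<in>B \<Longrightarrow> (\<lambda>n. u n v) \<longlonglongrightarrow> d v" using d0 by blast
    have "(\<lambda>n. \<Sum>v\<in>B. u n v *\<^sub>R v) \<longlonglongrightarrow> (\<Sum>v\<in>B. d v *\<^sub>R v)"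
      by (intro tendsto_sum tendsto_scaleR d tendsto_const)
    moreover have "x = (\<lambda>n. \<Sum>v\<in>B. u n v *\<^sub>R v)" using u by (intro ext) simp
    ultimately have "x \<longlonglongrightarrow> (\<Sum>v\<in>B. d v *\<^sub>R v)" by simp
    then have "l = (\<Sum>v\<in>B. d v *\<^sub>R v)" using lim LIMSEQ_unique by blast
    then show "l \<in> span B" by (simp add: span_finite[OF insert.hyps(1)])
  qed
  have ne: "span B \<noteq> {}" using span_zero by auto
  define e where "e = infdist b (span B)"
  have "e \<noteq> 0" using in_closed_iff_infdist_zero[OF cl ne, of b] bS by (simp add: e_def)
  moreover have "e \<ge> 0" by (simp add: e_def infdist_nonneg)
  ultimately have e0: "e > 0" by simp
  have ed: "e \<le> norm (b - s)" if "s \<in> span B" for s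
    using infdist_le[OF that, of b] by (simp add: e_def dist_norm)
  define C2 where "C2 = max (1/e) (C * (1 + norm b / e))"
  show ?case
  proof (intro exI[of _ C2] conjI allI ballI)
    show "C2 \<ge> 0" using e0 by (simp add: C2_def le_max_iff_disj)
    fix c v assume v: "v \<in> insert b B"
    let ?u = "\<Sum>w\<in>B. c w *\<^sub>R w"
    let ?s = "\<Sum>w\<in>insert b B. c w *\<^sub>R w"
    have s: "?s = c b *\<^sub>R b + ?u" using insert.hyps by simp
    have us: "?u \<in> span B" by (simp add: span_sum span_scale span_base)
    have cb: "\<bar>c b\<bar> * e \<le> norm ?s"
    proof (cases "c b = 0")
      case True then show ?thesis by simp
    next
      case False
      have "(- (1 / c b)) *\<^sub>R ?u \<in> span B" using us span_scale by blast
      then have "e \<le> norm (b - (- (1 / c b)) *\<^sub>R ?u)" by (rule ed)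
      also have "b - (- (1 / c b)) *\<^sub>R ?u = (1/ c b) *\<^sub>R ?s" unfolding s using False
        by (simp add: scaleR_add_right)
      finally have "e \<le> norm ?s / \<bar>c b\<bar>" by simp
      then show ?thesis using False by (simp add: field_simps)
    qed
    have cb2: "\<bar>c b\<bar> \<le> (1/e) * norm ?s" using cb e0 by (simp add: field_simps)
    have nu: "norm ?u \<le> (1 + norm b / e) * norm ?s"
    proof -
      have "?u = ?s - c b *\<^sub>R b" using s by simp
      then have "norm ?u \<le> norm ?s + \<bar>c b\<bar> * norm b"
        using norm_triangle_ineq4[of ?s "c b *\<^sub>R b"] by simp
      also have "\<dots> \<le> norm ?s + (1/e) * norm ?s * norm b"
        using mult_right_mono[OF cb2 norm_ge_zero[of b]] by simp
      finally show ?thesis by (simp add: algebra_simps)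
    qed
    show "\<bar>c v\<bar> \<le> C2 * norm ?s"
    proof (cases "v = b")
      case True
      have "(1/e) * norm ?s \<le> C2 * norm ?s"
        by (intro mult_right_mono) (auto simp: C2_def)
      then show ?thesis using True cb2 by simp
    next
      case False
      then have vB: "v \<in> B" using v by auto
      have "\<bar>c v\<bar> \<le> C * norm ?u" using C vB by blast
      also have "\<dots> \<le> C * ((1 + norm b / e) * norm ?s)"
        using nu C0 by (rule mult_left_mono)
      also have "\<dots> = (C * (1 + norm b / e)) * norm ?s" by simp
      also have "\<dots> \<le> C2 * norm ?s"
        by (intro mult_right_mono) (auto simp: C2_def)
      finally show ?thesis .
    qed
  qed
qed


theorem proposition2p9:
  fixes p :: "'a::{real_normed_algebra, banach}"
    and \<delta> :: "'a \<Rightarrow> 'a"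
  assumes "prime_algebra TYPE('a)"
    and "p * p = p" and "p \<noteq> 0"
    and "fin_dim_subspace (range (\<lambda>a. a * p))"
    and "derivation \<delta>"
  shows "continuous_on UNIV \<delta>"
proof -
  have lin: "linear \<delta>" using assms(5) by (simp add: derivation_def)
  define V where "V = range (\<lambda>a. a * p)"
  obtain B1 where B1: "finite B1" "span B1 = V"
    using assms(4) by (auto simp: fin_dim_subspace_def V_def)
  obtain D where D: "D \<subseteq> V" "independent D" "V \<subseteq> span D"
    using maximal_independent_subset by blast
  have fD: "finite D" using independent_span_bound[OF B1(1) D(2)] D(1) B1(2) by auto
  have "span D \<subseteq> V" by (metis B1(2) D(1) span_mono span_span)
  then have sD: "span D = V" using D(3) by blast
  have mulV: "a * e \<in> V" if eV: "e \<in> V" for a e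
  proof -
    obtain x where "e = x * p" using eV unfolding V_def by blast
    then have "a * e = (a * x) * p" by (simp add: mult.assoc)
    then show ?thesis by (simp add: V_def)
  qed
  have eD: "a * e \<in> span D" if "e \<in> D" for a e
    using mulV[of e a] that D(1) sD by auto
  define F where "F = (\<lambda>(e,d). \<lambda>a. representation D (a * e) d) ` (D \<times> D)"
  have fF: "finite F" using fD by (simp add: F_def)
  have lF: "\<forall>f\<in>F. linear f"
  proof
    fix f assume "f \<in> F"
    then obtain e d where ed: "e \<in> D" "f = (\<lambda>a. representation D (a * e) d)"
      by (auto simp: F_def)
    show "linear f"
    proof (rule linearI)
      fix a b :: 'a
      show "f (a + b) = f a + f b"
        using ed representation_add[OF D(2) eD[OF ed(1), of b] eD[OF ed(1), of a]]
        by (simp add: distrib_right)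
    next
      fix r :: real and a :: 'a
      show "f (r *\<^sub>R a) = r *\<^sub>R f a"
        using ed representation_scale[OF D(2) eD[OF ed(1), of a], of r]
        by simp
    qed
  qed
  have ker: "\<forall>w\<in>UNIV. (\<forall>f\<in>F. f w = 0) \<longrightarrow> w = 0"
  proof (intro ballI impI)
    fix a :: 'a assume h: "\<forall>f\<in>F. f a = 0"
    have r0: "representation D (a * e) d = 0" if "e \<in> D" "d \<in> D" for e d
    proof -
      have mem: "(\<lambda>a. representation D (a * e) d) \<in> F"
        unfolding F_def using that by (intro image_eqI[where x="(e,d)"]) auto
      show ?thesis using bspec[OF h mem] by simp
    qed
    have ae: "a * e = 0" if e: "e \<in> D" for e
    proof -
      have "a * e = (\<Sum>d\<in>D. representation D (a * e) d *\<^sub>R d)"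
        using sum_representation_eq[OF D(2) eD[OF e] fD order_refl] by simp
      also have "\<dots> = 0" using r0[OF e] by simp
      finally show ?thesis .
    qed
    have la: "linear (\<lambda>y. a * y)"
      using bounded_linear_mult_right[of a] bounded_linear.linear by blast
    have ay: "a * y = 0" if "y \<in> span D" for y
      using linear_eq_0_on_span[OF la _ that] ae by blast
    have "\<forall>x. a * x * p = 0"
    proof
      fix x
      have "x * p \<in> span D" using sD by (auto simp: V_def)
      then show "a * x * p = 0" using ay by (simp add: mult.assoc)
    qed
    then show "a = 0" using assms(1) assms(3) by (auto simp: prime_algebra_def)
  qed
  obtain T :: "'a set" where T: "finite T" "UNIV \<subseteq> span T"
    using fin_kernel[OF fF lF subspace_UNIV ker] by blast
  obtain B where B: "B \<subseteq> T" "independent B" "T \<subseteq> span B"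
    using maximal_independent_subset by blast
  have "B \<subseteq> span T" using B(1) span_superset by blast
  then have fB: "finite B"
    using independent_span_bound[OF T(1) B(2)] by simp
  have "span T \<subseteq> span B" using span_mono[OF B(3)] by (simp add: span_span)
  then have spB: "x \<in> span B" for x
    using T(2) by blast
  obtain C where C0: "C \<ge> 0" and C: "\<forall>c. \<forall>v\<in>B. \<bar>c v\<bar> \<le> C * norm (\<Sum>w\<in>B. c w *\<^sub>R w)"
    using coeff_bound[OF fB B(2)] by blast
  define K where "K = C * (\<Sum>v\<in>B. norm (\<delta> v))"
  have bnd: "norm (\<delta> a) \<le> norm a * K" for a
  proof -
    define r where "r = representation B a"
    have a_eq: "(\<Sum>v\<in>B. r v *\<^sub>R v) = a"
      unfolding r_def using sum_representation_eq[OF B(2) spB fB order_refl] .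
    have "\<delta> a = \<delta> (\<Sum>v\<in>B. r v *\<^sub>R v)" using a_eq by simp
    also have "\<dots> = (\<Sum>v\<in>B. r v *\<^sub>R \<delta> v)"
      by (simp add: linear_sum[OF lin] linear_scale[OF lin])
    finally have eq: "\<delta> a = (\<Sum>v\<in>B. r v *\<^sub>R \<delta> v)" .
    have "norm (\<delta> a) \<le> (\<Sum>v\<in>B. norm (r v *\<^sub>R \<delta> v))"
      unfolding eq by (rule norm_sum)
    also have "\<dots> = (\<Sum>v\<in>B. \<bar>r v\<bar> * norm (\<delta> v))" by simp
    also have "\<dots> \<le> (\<Sum>v\<in>B. (C * norm a) * norm (\<delta> v))"
    proof (rule sum_mono)
      fix v assume v: "v \<in> B"
      have "\<bar>r v\<bar> \<le> C * norm a" using C[rule_format, OF v, of r] a_eq by simp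
      then show "\<bar>r v\<bar> * norm (\<delta> v) \<le> (C * norm a) * norm (\<delta> v)"
        by (rule mult_right_mono) simp
    qed
    also have "\<dots> = norm a * K" by (simp add: K_def sum_distrib_left mult_ac)
    finally show ?thesis .
  qed
  have "bounded_linear \<delta>"
    by (rule bounded_linear_intro[where K=K])
       (auto simp: linear_add[OF lin] linear_scale[OF lin] bnd)
  then show ?thesis by (rule linear_continuous_on)
qed

end
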